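(* Let $q$ be an odd prime power and $d\ge 2$. Let $V$ be a $(2d+1)$-dimensional vector space over $\mathbb{F}_q$ with basis $z,e_0,f_0,x,y,e_1,f_1,\dots,e_{d-2},f_{d-2}$ and nondegenerate symmetric bilinear form $\beta$ with $V=\langle z\rangle\perp\langle e_0,f_0\rangle\perp\langle x,y\rangle\perp\langle e_1,f_1\rangle\perp\cdots\perp\langle e_{d-2},f_{d-2}\rangle$, $\beta(z,z)=1$, $\beta(e_i,f_i)=1$, $\beta(e_i,e_i)=\beta(f_i,f_i)=0$, and $\langle x,y\rangle$ anisotropic; let $\kappa(v)=\beta(v,v)/2$ and let $\mathcal{Q}(2d,q)$ be the associated parabolic quadric. Let $W=\langle z,e_0,f_0\rangle$, $U=W^\perp$, $B=\{g\oplus 1_U: g\in\Omega(W)\}$ with $\Omega(W)$ the derived subgroup of the orthogonal group of $(W,\kappa|_W)$, let $\tau$ be the linear map with $z\mapsto -z$ fixing all other basis vectors, and $A=\langle B,\tau\rangle$. Then $A$ and $B$ have the same orbits on the points of $\mathcal{Q}(2d,q)$.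
   Context: A point of $\mathcal{Q}(2d,q)$ is a $1$-dimensional subspace of $V$ on which $\kappa$ vanishes. *)

theory Defs
  imports Main "HOL-Algebra.Generated_Groups"
begin

text \<open>Coordinates: V = functions nat => 'a supported on {0..<2d+1}.
  Basis order: 0 = z, 1 = e0, 2 = f0, 3 = x, 4 = y,
  2i+3 = e_i, 2i+4 = f_i for 1 <= i <= d-2.
  Matrices are functions nat => nat => 'a supported on {0..<n} x {0..<n}.\<close>

definition vecs :: "nat \<Rightarrow> (nat \<Rightarrow> 'a::zero) set" where
  "vecs n = {v. \<forall>i\<ge>n. v i = 0}"

definition mats :: "nat \<Rightarrow> (nat \<Rightarrow> nat \<Rightarrow> 'a::zero) set" where
  "mats n = {M. \<forall>i j. (n \<le> i \<or> n \<le> j) \<longrightarrow> M i j = 0}"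

definition mv :: "nat \<Rightarrow> (nat \<Rightarrow> nat \<Rightarrow> 'a::comm_ring_1) \<Rightarrow> (nat \<Rightarrow> 'a) \<Rightarrow> (nat \<Rightarrow> 'a)" where
  "mv n M v = (\<lambda>i. if i < n then (\<Sum>j<n. M i j * v j) else 0)"

definition mmul :: "nat \<Rightarrow> (nat \<Rightarrow> nat \<Rightarrow> 'a::comm_ring_1) \<Rightarrow> (nat \<Rightarrow> nat \<Rightarrow> 'a) \<Rightarrow> (nat \<Rightarrow> nat \<Rightarrow> 'a)" where
  "mmul n M N = (\<lambda>i k. if i < n \<and> k < n then (\<Sum>j<n. M i j * N j k) else 0)"

definition idm :: "nat \<Rightarrow> (nat \<Rightarrow> nat \<Rightarrow> 'a::comm_ring_1)" where
  "idm n = (\<lambda>i j. if i = j \<and> i < n then 1 else 0)"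

definition GLn :: "nat \<Rightarrow> (nat \<Rightarrow> nat \<Rightarrow> 'a::comm_ring_1) monoid" where
  "GLn n = \<lparr> carrier = {M \<in> mats n. \<exists>N \<in> mats n. mmul n M N = idm n \<and> mmul n N M = idm n},
             mult = mmul n, one = idm n \<rparr>"

text \<open>Gram matrix of beta w.r.t. the basis; the anisotropic plane <x,y> has Gram matrix [[a,b],[b,c]].\<close>
definition gram :: "'a::comm_ring_1 \<Rightarrow> 'a \<Rightarrow> 'a \<Rightarrow> nat \<Rightarrow> nat \<Rightarrow> 'a" where
  "gram a b c i j =
    (if i = 0 \<and> j = 0 then 1
     else if (i = 1 \<and> j = 2) \<or> (i = 2 \<and> j = 1) then 1
     else if i = 3 \<and> j = 3 then a
     else if (i = 3 \<and> j = 4) \<or> (i = 4 \<and> j = 3) then b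
     else if i = 4 \<and> j = 4 then c
     else if 5 \<le> min i j \<and> odd (min i j) \<and> max i j = min i j + 1 then 1
     else 0)"

definition beta :: "nat \<Rightarrow> 'a::comm_ring_1 \<Rightarrow> 'a \<Rightarrow> 'a \<Rightarrow> (nat \<Rightarrow> 'a) \<Rightarrow> (nat \<Rightarrow> 'a) \<Rightarrow> 'a" where
  "beta n a b c u v = (\<Sum>i<n. \<Sum>j<n. u i * gram a b c i j * v j)"

definition kappa :: "nat \<Rightarrow> 'a::field \<Rightarrow> 'a \<Rightarrow> 'a \<Rightarrow> (nat \<Rightarrow> 'a) \<Rightarrow> 'a" where
  "kappa n a b c v = beta n a b c v v / 2"

definition quadric_points :: "nat \<Rightarrow> 'a::field \<Rightarrow> 'a \<Rightarrow> 'a \<Rightarrow> (nat \<Rightarrow> 'a) set set" where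
  "quadric_points n a b c =
     {P. \<exists>v \<in> vecs n. (\<exists>i. v i \<noteq> 0) \<and> P = {(\<lambda>i. s * v i) | s. True} \<and> (\<forall>w\<in>P. kappa n a b c w = 0)}"

text \<open>W = <z,e0,f0> = span of coordinates 0,1,2. O(W): isometries of (W, kappa|W),
  written as 3x3 matrices w.r.t. the basis z,e0,f0.\<close>
definition OW :: "nat \<Rightarrow> 'a::field \<Rightarrow> 'a \<Rightarrow> 'a \<Rightarrow> (nat \<Rightarrow> nat \<Rightarrow> 'a) monoid" where
  "OW n a b c = \<lparr> carrier = {M \<in> carrier (GLn 3).
                     \<forall>w \<in> vecs 3. kappa n a b c (mv 3 M w) = kappa n a b c w},
                 mult = mmul 3, one = idm 3 \<rparr>"

text \<open>g \<oplus> 1_U, where U = W^perp = span of coordinates 3..2d.\<close>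
definition embedW :: "nat \<Rightarrow> (nat \<Rightarrow> nat \<Rightarrow> 'a::comm_ring_1) \<Rightarrow> (nat \<Rightarrow> nat \<Rightarrow> 'a)" where
  "embedW n g = (\<lambda>i j. if i < 3 \<and> j < 3 then g i j
                       else if i = j \<and> i < n then 1 else 0)"

definition tau :: "nat \<Rightarrow> (nat \<Rightarrow> nat \<Rightarrow> 'a::comm_ring_1)" where
  "tau n = (\<lambda>i j. if i = j \<and> i < n then (if i = 0 then -1 else 1) else 0)"

definition orbit_on :: "nat \<Rightarrow> (nat \<Rightarrow> nat \<Rightarrow> 'a::comm_ring_1) set \<Rightarrow> (nat \<Rightarrow> 'a) set \<Rightarrow> (nat \<Rightarrow> 'a) set set" where
  "orbit_on n S P = {mv n g ` P | g. g \<in> S}"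

end

theory Submission
  imports Defs "HOL-Number_Theory.Residues"
begin


lemma mmul_assoc: "mmul n (mmul n A B) C = mmul n A (mmul n B C)"
proof (rule ext, rule ext)
  fix i k
  show "mmul n (mmul n A B) C i k = mmul n A (mmul n B C) i k"
    unfolding mmul_def
    by (auto simp: sum_distrib_left sum_distrib_right mult.assoc intro: sum.swap)
qed

lemma mmul_in_mats: "mmul n A B \<in> mats n"
  by (auto simp: mmul_def mats_def)

lemma idm_in_mats: "idm n \<in> mats n"
  by (auto simp: idm_def mats_def)

lemma if01_mult: "(if P then 1 else 0) * x = (if P then x else (0::'a::comm_ring_1))"
  "x * (if P then 1 else 0) = (if P then x else (0::'a::comm_ring_1))" by simp_all

lemma mmul_idm_left: "M \<in> mats n \<Longrightarrow> mmul n (idm n) M = M"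
  by (rule ext, rule ext) (auto simp: mmul_def idm_def mats_def if01_mult)

lemma mmul_idm_right: "M \<in> mats n \<Longrightarrow> mmul n M (idm n) = M"
  by (rule ext, rule ext) (auto simp: mmul_def idm_def mats_def if01_mult)

lemma mv_mmul: "mv n (mmul n M N) x = mv n M (mv n N x)"
proof (rule ext)
  fix i
  show "mv n (mmul n M N) x i = mv n M (mv n N x) i"
    unfolding mv_def mmul_def
    by (auto simp: sum_distrib_left sum_distrib_right mult.assoc intro: sum.swap)
qed

lemma mv_in_vecs: "mv n M x \<in> vecs n"
  by (auto simp: mv_def vecs_def)

lemma mv_idm: "x \<in> vecs n \<Longrightarrow> mv n (idm n) x = x"
  by (rule ext) (auto simp: mv_def idm_def vecs_def if01_mult)

lemma mv_scale: "mv n M (\<lambda>i. s * v i) = (\<lambda>i. s * mv n M v i)"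
  by (rule ext) (auto simp: mv_def sum_distrib_left algebra_simps)

lemma group_GLn: "group (GLn n :: (nat \<Rightarrow> nat \<Rightarrow> 'a::comm_ring_1) monoid)"
proof (rule groupI)
  fix x y :: "nat \<Rightarrow> nat \<Rightarrow> 'a"
  assume x: "x \<in> carrier (GLn n)" and y: "y \<in> carrier (GLn n)"
  then obtain x' y' where x': "x' \<in> mats n" "mmul n x x' = idm n" "mmul n x' x = idm n"
    and y': "y' \<in> mats n" "mmul n y y' = idm n" "mmul n y' y = idm n"
    by (auto simp: GLn_def)
  have "mmul n (mmul n x y) (mmul n y' x') = idm n"
    by (metis mmul_assoc x' y' mmul_idm_left)
  moreover have "mmul n (mmul n y' x') (mmul n x y) = idm n"
    using y x by (metis mmul_assoc x' y' mmul_idm_left GLn_def partial_object.select_convs(1) mem_Collect_eq)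
  ultimately show "x \<otimes>\<^bsub>GLn n\<^esub> y \<in> carrier (GLn n)"
    by (auto simp: GLn_def mmul_in_mats)
next
  show "\<one>\<^bsub>GLn n\<^esub> \<in> carrier (GLn n)"
    by (auto simp: GLn_def idm_in_mats mmul_idm_left)
next
  fix x y z
  show "x \<otimes>\<^bsub>GLn n\<^esub> y \<otimes>\<^bsub>GLn n\<^esub> z = x \<otimes>\<^bsub>GLn n\<^esub> (y \<otimes>\<^bsub>GLn n\<^esub> z)"
    by (simp add: GLn_def mmul_assoc)
next
  fix x assume "x \<in> carrier (GLn n)"
  then show "\<one>\<^bsub>GLn n\<^esub> \<otimes>\<^bsub>GLn n\<^esub> x = x"
    by (simp add: GLn_def mmul_idm_left)
next
  fix x assume x: "x \<in> carrier (GLn n)"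
  then obtain x' where x': "x' \<in> mats n" "mmul n x x' = idm n" "mmul n x' x = idm n"
    by (auto simp: GLn_def)
  then show "\<exists>y\<in>carrier (GLn n). y \<otimes>\<^bsub>GLn n\<^esub> x = \<one>\<^bsub>GLn n\<^esub>"
    using x by (auto simp: GLn_def)
qed



definition bw :: "(nat \<Rightarrow> 'a::comm_ring_1) \<Rightarrow> (nat \<Rightarrow> 'a) \<Rightarrow> 'a" where
  "bw x y = x 0 * y 0 + x 1 * y 2 + x 2 * y 1"

lemma sum3: "(\<Sum>j<(3::nat). f j) = f 0 + f 1 + f (2::nat)"
proof -
  have "{..<(3::nat)} = {0,1,2}" by auto
  then show ?thesis by (simp add: add.assoc)
qed

lemma sum_vecs3:
  assumes "3 \<le> n" "\<And>j. j \<ge> 3 \<Longrightarrow> f j = 0"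
  shows "(\<Sum>j<n. f j) = f 0 + f 1 + f (2::nat)"
proof -
  have "(\<Sum>j<n. f j) = (\<Sum>j<3. f j)"
    using assms by (intro sum.mono_neutral_right) auto
  then show ?thesis by (simp add: sum3)
qed

lemma beta_vecs3:
  assumes "x \<in> vecs 3" "3 \<le> n"
  shows "beta n a b c x x = bw x x"
proof -
  have z: "x j = 0" if "j \<ge> 3" for j using assms that by (auto simp: vecs_def)
  have "beta n a b c x x = (\<Sum>i<n. \<Sum>j<n. x i * gram a b c i j * x j)" by (simp add: beta_def)
  also have "\<dots> = (\<Sum>i<n. x i * gram a b c i 0 * x 0 + x i * gram a b c i 1 * x 1 + x i * gram a b c i 2 * x 2)"
    by (intro sum.cong refl sum_vecs3) (auto simp: assms z)
  also have "\<dots> = bw x x"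
    by (subst sum_vecs3) (auto simp: assms z gram_def bw_def algebra_simps)
  finally show ?thesis .
qed

lemma kappa_vecs3:
  assumes "x \<in> vecs 3" "3 \<le> n"
  shows "kappa n a b c x = bw x x / 2"
  using beta_vecs3[OF assms] by (simp add: kappa_def)

lemma mv3: "mv 3 M x = (\<lambda>i. if i < 3 then M i 0 * x 0 + M i 1 * x 1 + M i 2 * x 2 else 0)"
  unfolding mv_def sum3 by simp

lemma GLn_mult: "x \<otimes>\<^bsub>GLn n\<^esub> y = mmul n x y" by (simp add: GLn_def)
lemma GLn_one: "\<one>\<^bsub>GLn n\<^esub> = idm n" by (simp add: GLn_def)
lemma OW_mult: "x \<otimes>\<^bsub>OW n a b c\<^esub> y = mmul 3 x y" by (simp add: OW_def)
lemma OW_one: "\<one>\<^bsub>OW n a b c\<^esub> = idm 3" by (simp add: OW_def)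

lemma mats3_eqI:
  assumes "M \<in> mats 3" "N \<in> mats 3" "\<And>x. mv 3 M x = mv 3 N x"
  shows "M = N"
proof (rule ext, rule ext)
  fix i j
  show "M i j = N i j"
  proof (cases "i < 3 \<and> j < 3")
    case True
    define e where "e = (\<lambda>k. if k = j then 1 else 0 :: 'a)"
    have "mv 3 M e i = mv 3 N e i" using assms(3) by simp
    moreover have "j = 0 \<or> j = 1 \<or> j = 2" using True by auto
    ultimately show ?thesis using True by (auto simp: mv3 e_def)
  next
    case False then show ?thesis using assms(1,2) by (auto simp: mats_def)
  qed
qed

lemma group_OW:
  assumes "3 \<le> n"
  shows "group (OW n a b c :: (nat \<Rightarrow> nat \<Rightarrow> 'a::field) monoid)"
proof (rule groupI)
  fix x y :: "nat \<Rightarrow> nat \<Rightarrow> 'a"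
  assume x: "x \<in> carrier (OW n a b c)" and y: "y \<in> carrier (OW n a b c)"
  then have "x \<in> carrier (GLn 3)" "y \<in> carrier (GLn 3)" by (auto simp: OW_def)
  then have "mmul 3 x y \<in> carrier (GLn 3)"
    using monoid.m_closed[OF group.is_monoid[OF group_GLn], of x 3 y] by (simp add: GLn_mult)
  moreover have "kappa n a b c (mv 3 (mmul 3 x y) w) = kappa n a b c w" if "w \<in> vecs 3" for w
  proof -
    have k: "\<forall>w\<in>vecs 3. kappa n a b c (mv 3 x w) = kappa n a b c w"
      "\<forall>w\<in>vecs 3. kappa n a b c (mv 3 y w) = kappa n a b c w"
      using x y by (auto simp: OW_def)
    have "kappa n a b c (mv 3 x (mv 3 y w)) = kappa n a b c (mv 3 y w)"
      using k(1) mv_in_vecs by blast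
    also have "\<dots> = kappa n a b c w" using k(2) that by blast
    finally show ?thesis by (simp add: mv_mmul)
  qed
  ultimately show "x \<otimes>\<^bsub>OW n a b c\<^esub> y \<in> carrier (OW n a b c)"
    by (auto simp: OW_def)
next
  show "\<one>\<^bsub>OW n a b c\<^esub> \<in> carrier (OW n a b c)"
    using monoid.one_closed[OF group.is_monoid[OF group_GLn[where 'a='a and n=3]]]
    by (simp add: OW_def mv_idm GLn_one)
next
  fix x y z
  show "x \<otimes>\<^bsub>OW n a b c\<^esub> y \<otimes>\<^bsub>OW n a b c\<^esub> z = x \<otimes>\<^bsub>OW n a b c\<^esub> (y \<otimes>\<^bsub>OW n a b c\<^esub> z)"
    by (simp add: OW_def mmul_assoc)
next
  fix x assume "x \<in> carrier (OW n a b c)"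
  then show "\<one>\<^bsub>OW n a b c\<^esub> \<otimes>\<^bsub>OW n a b c\<^esub> x = x"
    by (simp add: OW_def GLn_def mmul_idm_left)
next
  fix x assume x: "x \<in> carrier (OW n a b c)"
  then obtain x' where x': "x' \<in> mats 3" "mmul 3 x x' = idm 3" "mmul 3 x' x = idm 3"
    and xm: "x \<in> mats 3"
    and xk: "\<forall>w\<in>vecs 3. kappa n a b c (mv 3 x w) = kappa n a b c w"
    by (auto simp: OW_def GLn_def)
  have "kappa n a b c (mv 3 x' w) = kappa n a b c w" if "w \<in> vecs 3" for w
  proof -
    have "kappa n a b c (mv 3 x' w) = kappa n a b c (mv 3 x (mv 3 x' w))"
      using xk mv_in_vecs by metis
    also have "\<dots> = kappa n a b c w" using that x' by (simp flip: mv_mmul add: mv_idm)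
    finally show ?thesis .
  qed
  then have "x' \<in> carrier (OW n a b c)" using x' xm by (auto simp: OW_def GLn_def)
  then show "\<exists>y\<in>carrier (OW n a b c). y \<otimes>\<^bsub>OW n a b c\<^esub> x = \<one>\<^bsub>OW n a b c\<^esub>"
    using x' by (auto simp: OW_def)
qed



lemma two_ne_zero_odd:
  assumes "odd (card (UNIV :: 'a::{finite,field} set))"
  shows "(2::'a) \<noteq> 0"
proof
  assume h: "(2::'a) = 0"
  have "of_nat 2 = (0::'a)" using h by simp
  then have "CHAR('a) dvd 2" by (simp only: of_nat_eq_0_iff_char_dvd)
  moreover have "CHAR('a) \<noteq> Suc 0" by simp
  moreover have "CHAR('a) \<noteq> 0" using finite_imp_CHAR_pos[where 'a='a] by simp
  ultimately have "CHAR('a) = 2"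
    using dvd_imp_le[of "CHAR('a)" 2] by (cases "CHAR('a)") (auto simp: numeral_2_eq_2 less_Suc_eq_le le_Suc_eq dvd_refl)
  then have "even (card (UNIV :: 'a set))" using CHAR_dvd_CARD[where 'a='a] by simp
  then show False using assms by simp
qed

definition gd :: "(nat \<Rightarrow> 'a) \<Rightarrow> nat \<Rightarrow> 'a" where
  "gd d j = (if j = 0 then d 0 else if j = 1 then d 2 else d 1)"

definition reflm :: "(nat \<Rightarrow> 'a::field) \<Rightarrow> nat \<Rightarrow> nat \<Rightarrow> 'a" where
  "reflm d = (\<lambda>i j. if i < 3 \<and> j < 3 then (if i = j then 1 else 0) - 2 * d i * gd d j / bw d d else 0)"

definition rf :: "(nat \<Rightarrow> 'a::field) \<Rightarrow> (nat \<Rightarrow> 'a) \<Rightarrow> nat \<Rightarrow> 'a" where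
  "rf d x = (\<lambda>i. if i < 3 then x i - 2 * bw x d / bw d d * d i else 0)"

lemma mv_reflm: "mv 3 (reflm d) x = rf d x"
proof (rule ext)
  fix i
  show "mv 3 (reflm d) x i = rf d x i"
  proof (cases "i < 3")
    case True
    then have "i = 0 \<or> i = 1 \<or> i = 2" by auto
    then show ?thesis
      by (auto simp: mv3 reflm_def rf_def gd_def bw_def divide_inverse algebra_simps)
  qed (simp add: mv3 rf_def)
qed

lemma bw_sub: "bw (\<lambda>i. x i - s * d i) (\<lambda>i. x i - s * d i) = bw x x - 2 * s * bw x d + s^2 * bw d d"
  by (simp add: bw_def algebra_simps power2_eq_square)

lemma bw_rf: "bw (rf d x) y = bw (\<lambda>i. x i - 2 * bw x d / bw d d * d i) y"
  by (simp add: rf_def bw_def)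

lemma bw_rf2: "bw y (rf d x) = bw y (\<lambda>i. x i - 2 * bw x d / bw d d * d i)"
  by (simp add: rf_def bw_def)

lemma bw_sym: "bw x y = bw y x" by (simp add: bw_def algebra_simps)

lemma bw_lin: "bw (\<lambda>i. x i - s * d i) y = bw x y - s * bw d y"
  by (simp add: bw_def algebra_simps)

lemma rf_alt: "bw (rf d x) y = bw (\<lambda>i. x i - (2 * bw x d / bw d d) * d i) y"
  "bw y (rf d x) = bw y (\<lambda>i. x i - (2 * bw x d / bw d d) * d i)"
  by (simp_all add: rf_def bw_def)

lemma rf_bw:
  assumes "bw d d \<noteq> 0"
  shows "bw (rf d x) (rf d x) = bw x x"
proof -
  define s where "s = 2 * bw x d / bw d d"
  have "bw (rf d x) (rf d x) = bw (\<lambda>i. x i - s * d i) (\<lambda>i. x i - s * d i)"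
    by (simp add: rf_def bw_def s_def)
  also have "\<dots> = bw x x - 2 * s * bw x d + s^2 * bw d d" by (rule bw_sub)
  also have "\<dots> = bw x x" using assms by (simp add: s_def power2_eq_square field_simps)
  finally show ?thesis .
qed

lemma rf_rf:
  assumes "bw d d \<noteq> 0"
  shows "rf d (rf d x) = mv 3 (idm 3) x"
proof -
  define s where "s = 2 * bw x d / bw d d"
  have "bw (rf d x) d = bw (\<lambda>i. x i - s * d i) d"
    by (simp add: rf_def bw_def s_def)
  also have "\<dots> = bw x d - s * bw d d" by (rule bw_lin)
  also have "\<dots> = - bw x d" using assms by (simp add: s_def)
  finally have h: "bw (rf d x) d = - bw x d" .
  show ?thesis
    unfolding rf_def[of d "rf d x"] h
    using assms by (auto simp: rf_def mv_def idm_def if01_mult sum.delta intro!: ext)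
qed

lemma reflm_in_mats: "reflm d \<in> mats 3"
  by (auto simp: reflm_def mats_def)

lemma reflm_sq:
  assumes "bw d d \<noteq> 0"
  shows "mmul 3 (reflm d) (reflm d) = idm 3"
  by (rule mats3_eqI) (auto simp: mmul_in_mats idm_in_mats mv_mmul mv_reflm rf_rf assms)

lemma reflm_OW:
  assumes "bw d d \<noteq> 0" "3 \<le> n"
  shows "reflm d \<in> carrier (OW n a b c)"
proof -
  have "kappa n a b c (mv 3 (reflm d) w) = kappa n a b c w" if "w \<in> vecs 3" for w
    using that assms mv_in_vecs[of 3 "reflm d" w]
    by (simp add: kappa_vecs3 mv_reflm rf_bw)
  then show ?thesis
    using assms reflm_sq[OF assms(1)] reflm_in_mats by (auto simp: OW_def GLn_def)
qed

lemma reflm_inv: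
  assumes "bw d d \<noteq> 0" "3 \<le> n"
  shows "inv\<^bsub>OW n a b c\<^esub> (reflm d) = reflm d"
  using group.inv_equality[OF group_OW[OF assms(2), of a b c], where x = "reflm d" and y = "reflm d"] reflm_OW[OF assms] reflm_sq[OF assms(1)]
  by (simp add: OW_mult OW_one)

definition e0 :: "nat \<Rightarrow> 'a::field" where "e0 = (\<lambda>i. if i = 0 then 1 else 0)"

lemma tau3_reflm: "tau 3 = (reflm e0 :: nat \<Rightarrow> nat \<Rightarrow> 'a::field)"
  by (auto simp: tau_def reflm_def e0_def gd_def bw_def intro!: ext)

lemma bw_e0: "bw e0 (e0::nat \<Rightarrow> 'a::field) = 1" by (simp add: bw_def e0_def)



lemma exists_c:
  assumes "(2::'a::field) \<noteq> 0"
  shows "\<exists>c::nat \<Rightarrow> 'a. bw c c = 1 \<and> bw w c = 0 \<and> (c 0 = 0 \<or> c 0 = 1)"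
proof (cases "w 2 = 0")
  case False
  show ?thesis
    by (rule exI[of _ "\<lambda>i. if i = 0 then 1 else if i = 1 then - w 0 / w 2 else 0"])
      (use False in \<open>simp add: bw_def field_simps\<close>)
next
  case w2: True
  show ?thesis
  proof (cases "w 1 = 0")
    case False
    show ?thesis
      by (rule exI[of _ "\<lambda>i. if i = 0 then 1 else if i = 2 then - w 0 / w 1 else 0"])
        (use False w2 in \<open>simp add: bw_def field_simps\<close>)
  next
    case True
    show ?thesis
      by (rule exI[of _ "\<lambda>i. if i = 0 then 0 else if i = 1 then 1 else 1/2"])
        (use True w2 assms in \<open>simp add: bw_def field_simps\<close>)
  qed
qed

lemma rf_cong:
  assumes h: "\<And>i. i < 3 \<Longrightarrow> x i = y i"
  shows "rf d x = rf d y"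
proof -
  have "bw x d = bw y d" using h[of 0] h[of 1] h[of 2] by (simp add: bw_def)
  then show ?thesis by (auto simp: rf_def h intro!: ext)
qed

lemma key_vec:
  assumes two: "(2::'a::field) \<noteq> 0" and c: "bw c c = 1" "bw w c = 0" "c 0 = 0 \<or> c 0 = 1"
  defines "d \<equiv> (\<lambda>i. if i = 0 then 1 + c 0 else c i)"
  shows "bw d d \<noteq> 0" "rf e0 (rf d (rf e0 (rf d w))) = rf e0 (w::nat \<Rightarrow> 'a)"
proof -
  define s where "s = 1 + c 0"
  have s: "s \<noteq> 0" using c(3) two by (auto simp: s_def)
  have dd: "bw d d = 2 * s"
    using c(1) by (simp add: d_def s_def bw_def algebra_simps power2_eq_square)
  then show "bw d d \<noteq> 0" using s two by simp
  have wd: "bw w d = w 0"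
    using c(2) by (simp add: d_def bw_def algebra_simps)
  define u where "u = rf d w"
  have u: "u i = w i - (w 0 / s) * d i" if "i < 3" for i
    using that s two by (simp add: u_def rf_def dd wd field_simps)
  have u0: "u 0 = 0" using u[of 0] s by (simp add: d_def s_def)
  have be: "bw u e0 = 0" by (simp add: bw_def e0_def u0)
  have u3: "u i = 0" if "\<not> i < 3" for i using that by (simp add: u_def rf_def)
  have ue: "rf e0 u = u"
    unfolding rf_def[of e0 u] be by (auto simp: u3 intro!: ext)
  have ud: "bw u d = - w 0"
  proof -
    have "bw u d = bw (\<lambda>i. w i - (2 * bw w d / bw d d) * d i) d" by (simp add: u_def rf_alt)
    also have "\<dots> = bw w d - (2 * bw w d / bw d d) * bw d d" by (rule bw_lin)
    also have "\<dots> = - w 0" using s two by (simp add: dd wd)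
    finally show ?thesis .
  qed
  have "rf d u i = w i" if "i < 3" for i
    using that s two u[OF that] by (simp add: rf_def ud dd field_simps)
  then have "rf e0 (rf d u) = rf e0 w" by (intro rf_cong) simp
  then show "rf e0 (rf d (rf e0 (rf d w))) = rf e0 w"
    using ue by (simp add: u_def)
qed

lemma key_W:
  assumes two: "(2::'a::field) \<noteq> 0" and n: "3 \<le> n"
  shows "\<exists>g \<in> derived (OW n a b c) (carrier (OW n a b c)). mv 3 g w = mv 3 (tau 3) (w::nat \<Rightarrow> 'a)"
proof -
  obtain cc :: "nat \<Rightarrow> 'a" where cc: "bw cc cc = 1" "bw w cc = 0" "cc 0 = 0 \<or> cc 0 = 1"
    using exists_c[OF two] by blast
  define d where "d = (\<lambda>i. if i = 0 then 1 + cc 0 else cc i)"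
  have dd: "bw d d \<noteq> 0" and vec: "rf e0 (rf d (rf e0 (rf d w))) = rf e0 w"
    using key_vec[OF two cc] by (simp_all add: d_def)
  have ee: "bw e0 (e0::nat \<Rightarrow> 'a) \<noteq> 0" by (simp add: bw_e0)
  define T where "T = (reflm e0 :: nat \<Rightarrow> nat \<Rightarrow> 'a)"
  define R where "R = reflm d"
  define g where "g = mmul 3 (mmul 3 (mmul 3 T R) T) R"
  have TC: "T \<in> carrier (OW n a b c)" unfolding T_def by (rule reflm_OW[OF ee n])
  have RC: "R \<in> carrier (OW n a b c)" unfolding R_def by (rule reflm_OW[OF dd n])
  have "g = T \<otimes>\<^bsub>OW n a b c\<^esub> R \<otimes>\<^bsub>OW n a b c\<^esub> inv\<^bsub>OW n a b c\<^esub> T \<otimes>\<^bsub>OW n a b c\<^esub> inv\<^bsub>OW n a b c\<^esub> R"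
    by (simp add: g_def OW_mult T_def R_def reflm_inv[OF ee n] reflm_inv[OF dd n])
  then have "g \<in> derived_set (OW n a b c) (carrier (OW n a b c))"
    using TC RC by blast
  then have gD: "g \<in> derived (OW n a b c) (carrier (OW n a b c))"
    unfolding derived_def by (rule generate.incl)
  have "mv 3 g w = rf e0 (rf d (rf e0 (rf d w)))"
    by (simp add: g_def mv_mmul T_def R_def mv_reflm)
  also have "\<dots> = mv 3 (tau 3) w" by (simp add: vec tau3_reflm mv_reflm)
  finally show ?thesis using gD by blast
qed



lemma mats_eqI:
  assumes "M \<in> mats n" "N \<in> mats n" "\<And>x. mv n M x = mv n N x"
  shows "M = N"
proof (rule ext, rule ext)
  fix i j
  show "M i j = N i j"
  proof (cases "i < n \<and> j < n")
    case True
    define e where "e = (\<lambda>k. if k = j then 1 else 0 :: 'a)"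
    have "mv n M e i = mv n N e i" using assms(3) by simp
    then show ?thesis using True by (simp add: mv_def e_def if01_mult)
  next
    case False then show ?thesis using assms(1,2) by (auto simp: mats_def)
  qed
qed

lemma mv_embed:
  assumes "3 \<le> n"
  shows "mv n (embedW n g) x = (\<lambda>i. if i < 3 then mv 3 g x i else if i < n then x i else 0)"
proof (rule ext)
  fix i
  show "mv n (embedW n g) x i = (if i < 3 then mv 3 g x i else if i < n then x i else 0)"
  proof (cases "i < 3")
    case True
    have "(\<Sum>j<n. embedW n g i j * x j) = (\<Sum>j<3. embedW n g i j * x j)"
      using assms True by (intro sum.mono_neutral_right) (auto simp: embedW_def)
    then show ?thesis using True assms by (simp add: mv_def embedW_def)
  next
    case False
    then show ?thesis by (simp add: mv_def embedW_def if01_mult)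
  qed
qed

lemma mv3_cong:
  assumes h: "\<And>i. i < 3 \<Longrightarrow> x i = y i"
  shows "mv 3 g x = mv 3 g y"
proof -
  show ?thesis unfolding mv_def using h by (auto intro!: ext sum.cong)
qed

lemma embed_in_mats: "3 \<le> n \<Longrightarrow> embedW n g \<in> mats n"
  by (auto simp: embedW_def mats_def)

lemma embed_mmul:
  assumes "3 \<le> n"
  shows "mmul n (embedW n g) (embedW n h) = embedW n (mmul 3 g h)"
proof (rule mats_eqI[OF mmul_in_mats embed_in_mats[OF assms]])
  fix x
  have e: "mv 3 g (mv n (embedW n h) x) = mv 3 g (mv 3 h x)"
    by (rule mv3_cong) (simp add: mv_embed[OF assms])
  have "mv n (mmul n (embedW n g) (embedW n h)) x = mv n (embedW n g) (mv n (embedW n h) x)"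
    by (rule mv_mmul)
  also have "\<dots> = (\<lambda>i. if i < 3 then mv 3 g (mv 3 h x) i else if i < n then x i else 0)"
    by (subst mv_embed[OF assms], subst e) (auto simp: mv_embed[OF assms] intro!: ext)
  also have "\<dots> = mv n (embedW n (mmul 3 g h)) x"
    by (subst mv_embed[OF assms], subst mv_mmul) (rule refl)
  finally show "mv n (mmul n (embedW n g) (embedW n h)) x = mv n (embedW n (mmul 3 g h)) x" .
qed

lemma embed_idm:
  assumes "3 \<le> n" shows "embedW n (idm 3) = idm n"
  using assms by (auto simp: embedW_def idm_def intro!: ext)

lemma tau_embed:
  assumes "3 \<le> n" shows "tau n = embedW n (tau 3)"
  using assms by (auto simp: embedW_def tau_def intro!: ext)

lemma embed_GLn:
  assumes "3 \<le> n" "g \<in> carrier (GLn 3)"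
  shows "embedW n g \<in> carrier (GLn n)"
proof -
  obtain h where h: "h \<in> mats 3" "mmul 3 g h = idm 3" "mmul 3 h g = idm 3"
    using assms(2) by (auto simp: GLn_def)
  then show ?thesis
    using assms(1) by (auto simp: GLn_def embed_in_mats[OF assms(1)] embed_mmul embed_idm intro!: bexI[of _ "embedW n h"])
qed

lemma embed_inv:
  assumes "3 \<le> n" "g \<in> carrier (OW n' a b c)" "3 \<le> n'"
  shows "inv\<^bsub>GLn n\<^esub> (embedW n g) = embedW n (inv\<^bsub>OW n' a b c\<^esub> g)"
proof -
  interpret O: group "OW n' a b c" by (rule group_OW[OF assms(3)])
  have ig: "inv\<^bsub>OW n' a b c\<^esub> g \<in> carrier (OW n' a b c)" using assms(2) by simp
  have l: "mmul 3 (inv\<^bsub>OW n' a b c\<^esub> g) g = idm 3"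
    using O.l_inv[OF assms(2)] by (simp add: OW_mult OW_one)
  have cg: "carrier (OW n' a b c) \<subseteq> carrier (GLn 3)" by (auto simp: OW_def)
  have c1: "embedW n g \<in> carrier (GLn n)" using embed_GLn[OF assms(1)] cg assms(2) by blast
  have c2: "embedW n (inv\<^bsub>OW n' a b c\<^esub> g) \<in> carrier (GLn n)" using embed_GLn[OF assms(1)] cg ig by blast
  show ?thesis
    by (rule group.inv_equality[OF group_GLn[where n=n] _ c1 c2])
      (simp add: GLn_mult GLn_one embed_mmul[OF assms(1)] embed_idm[OF assms(1)] l)
qed

lemma (in group) coset2_closed:
  assumes N: "N \<lhd> G" and t: "t \<in> carrier G" "t \<otimes> t = \<one>"
    and x: "x \<in> carrier G" "x \<in> N \<or> t \<otimes> x \<in> N"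
    and y: "y \<in> carrier G" "y \<in> N \<or> t \<otimes> y \<in> N"
  shows "x \<otimes> y \<in> N \<or> t \<otimes> (x \<otimes> y) \<in> N"
proof -
  interpret normal N G by (rule N)
  have it: "inv t = t" using t inv_equality by blast
  have conj: "t \<otimes> h \<otimes> t \<in> N" if "h \<in> N" for h
    using inv_op_closed2[OF t(1) that] it by simp
  have Nc: "h \<in> carrier G" if "h \<in> N" for h using that subset by blast
  have tt: "t \<otimes> (t \<otimes> z) = z" if "z \<in> carrier G" for z
    using that t by (simp flip: m_assoc)
  show ?thesis
  proof (cases "x \<in> N")
    case xN: True
    show ?thesis
    proof (cases "y \<in> N")
      case True then show ?thesis using xN by simp
    next
      case False
      then have ty: "t \<otimes> y \<in> N" using y by blast
      have "t \<otimes> (x \<otimes> y) = (t \<otimes> x \<otimes> t) \<otimes> (t \<otimes> y)"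
        using t x y by (simp add: m_assoc) (simp flip: m_assoc)
      then show ?thesis using conj[OF xN] ty by simp
    qed
  next
    case False
    then have tx: "t \<otimes> x \<in> N" using x by blast
    show ?thesis
    proof (cases "y \<in> N")
      case True
      have "t \<otimes> (x \<otimes> y) = (t \<otimes> x) \<otimes> y" using t x y by (simp add: m_assoc)
      then show ?thesis using tx True by simp
    next
      case False
      then have ty: "t \<otimes> y \<in> N" using y by blast
      have "x \<otimes> y = (t \<otimes> (t \<otimes> x) \<otimes> t) \<otimes> (t \<otimes> y)"
        using t x y by (simp add: m_assoc) (simp flip: m_assoc)
      then show ?thesis using conj[OF tx] ty by simp
    qed
  qed
qed



theorem corollary3p6:
  fixes d :: nat and a b c :: "'a::{finite,field}"
  assumes "odd (card (UNIV :: 'a set))"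
    and "d \<ge> 2"
    and "\<forall>v \<in> vecs (2*d+1). (\<forall>i. i \<noteq> 3 \<and> i \<noteq> 4 \<longrightarrow> v i = 0) \<and> (\<exists>i. v i \<noteq> 0)
           \<longrightarrow> beta (2*d+1) a b c v v \<noteq> 0"
  shows "let n = 2*d+1;
             B = embedW n ` derived (OW n a b c) (carrier (OW n a b c));
             A = generate (GLn n) (insert (tau n) B)
         in \<forall>P \<in> quadric_points n a b c. orbit_on n A P = orbit_on n B P"
proof -
  define n where "n = 2*d+1"
  have n3: "3 \<le> n" using assms(2) by (simp add: n_def)
  have two: "(2::'a) \<noteq> 0" using two_ne_zero_odd[OF assms(1)] .
  define G where "G = OW n a b c"
  define D where "D = derived G (carrier G)"
  interpret O: group G unfolding G_def by (rule group_OW[OF n3])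
  have DN: "D \<lhd> G" unfolding D_def by (rule O.derived_self_is_normal)
  have DS: "subgroup D G" using DN by (simp add: normal_def)
  have Dc: "D \<subseteq> carrier G" using DS subgroup.subset by blast
  define T3 where "T3 = (tau 3 :: nat \<Rightarrow> nat \<Rightarrow> 'a)"
  have ee: "bw e0 (e0::nat \<Rightarrow> 'a) \<noteq> 0" by (simp add: bw_e0)
  have T3c: "T3 \<in> carrier G" unfolding T3_def G_def tau3_reflm by (rule reflm_OW[OF ee n3])
  have T3sq: "T3 \<otimes>\<^bsub>G\<^esub> T3 = \<one>\<^bsub>G\<^esub>"
    unfolding T3_def G_def tau3_reflm OW_mult OW_one by (rule reflm_sq[OF ee])
  have T3inv: "inv\<^bsub>G\<^esub> T3 = T3" using O.inv_equality[OF T3sq T3c T3c] .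
  define S where "S = {x \<in> carrier G. x \<in> D \<or> T3 \<otimes>\<^bsub>G\<^esub> x \<in> D}"
  define B where "B = embedW n ` D"
  define A where "A = generate (GLn n) (insert (tau n) B)"
  have tauE: "tau n = embedW n T3" unfolding T3_def by (rule tau_embed[OF n3])
  have T3S: "T3 \<in> S" using T3c T3sq subgroup.one_closed[OF DS] by (simp add: S_def)
  have AS: "A \<subseteq> embedW n ` S"
  proof
    fix g assume "g \<in> A"
    then show "g \<in> embedW n ` S" unfolding A_def
    proof (induction rule: generate.induct)
      case one
      have "\<one>\<^bsub>G\<^esub> \<in> S" using subgroup.one_closed[OF DS] by (simp add: S_def)
      moreover have "\<one>\<^bsub>GLn n\<^esub> = embedW n \<one>\<^bsub>G\<^esub>"
        by (simp add: GLn_one G_def OW_one embed_idm[OF n3])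
      ultimately show ?case by blast
    next
      case (incl h)
      then show ?case using T3S tauE Dc by (auto simp: B_def S_def)
    next
      case (inv h)
      then show ?case
      proof
        assume "h = tau n"
        then have "inv\<^bsub>GLn n\<^esub> h = embedW n (inv\<^bsub>G\<^esub> T3)"
          using embed_inv[OF n3 _ n3] T3c tauE by (simp add: G_def)
        then show ?thesis using T3inv T3S by simp
      next
        assume "h \<in> B"
        then obtain y where y: "y \<in> D" "h = embedW n y" by (auto simp: B_def)
        then have "inv\<^bsub>GLn n\<^esub> h = embedW n (inv\<^bsub>G\<^esub> y)"
          using embed_inv[OF n3 _ n3, of y a b c] Dc by (auto simp: G_def)
        moreover have "inv\<^bsub>G\<^esub> y \<in> S"
          using subgroup.m_inv_closed[OF DS y(1)] Dc by (auto simp: S_def)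
        ultimately show ?thesis by simp
      qed
    next
      case (eng h1 h2)
      then obtain x y where xy: "x \<in> S" "y \<in> S" "h1 = embedW n x" "h2 = embedW n y" by blast
      have "x \<otimes>\<^bsub>G\<^esub> y \<in> S"
        using xy(1,2) O.coset2_closed[OF DN T3c T3sq] by (auto simp: S_def)
      moreover have "h1 \<otimes>\<^bsub>GLn n\<^esub> h2 = embedW n (x \<otimes>\<^bsub>G\<^esub> y)"
        using xy by (simp add: GLn_mult G_def OW_mult embed_mmul[OF n3])
      ultimately show ?case by blast
    qed
  qed
  have main: "orbit_on n A P = orbit_on n B P" if P: "P \<in> quadric_points n a b c" for P
  proof -
    obtain v where Pv: "P = {(\<lambda>i. s * v i) | s. True}"
      using P by (auto simp: quadric_points_def)
    obtain y0 where y0: "y0 \<in> D" "mv 3 y0 v = mv 3 T3 v"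
      using key_W[OF two n3, of a b c v] by (auto simp: D_def G_def T3_def)
    have ev: "mv n (embedW n y0) p = mv n (embedW n T3) p" if "p \<in> P" for p
    proof -
      obtain s where p: "p = (\<lambda>i. s * v i)" using \<open>p \<in> P\<close> Pv by blast
      show ?thesis unfolding p mv_scale mv_embed[OF n3] y0(2) ..
    qed
    show ?thesis
    proof
      show "orbit_on n A P \<subseteq> orbit_on n B P"
      proof
        fix X assume "X \<in> orbit_on n A P"
        then obtain g where g: "g \<in> A" "X = mv n g ` P" by (auto simp: orbit_on_def)
        then obtain x where x: "x \<in> S" "g = embedW n x" using AS by blast
        show "X \<in> orbit_on n B P"
        proof (cases "x \<in> D")
          case True
          then show ?thesis using g x by (auto simp: orbit_on_def B_def)
        next
          case False
          then have y: "T3 \<otimes>\<^bsub>G\<^esub> x \<in> D" and xc: "x \<in> carrier G" using x by (auto simp: S_def)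
          define y' where "y' = T3 \<otimes>\<^bsub>G\<^esub> (T3 \<otimes>\<^bsub>G\<^esub> x) \<otimes>\<^bsub>G\<^esub> T3"
          have y'D: "y' \<in> D"
            using normal.inv_op_closed2[OF DN T3c y] T3inv by (simp add: y'_def)
          have "y' \<otimes>\<^bsub>G\<^esub> T3 = (T3 \<otimes>\<^bsub>G\<^esub> T3) \<otimes>\<^bsub>G\<^esub> x \<otimes>\<^bsub>G\<^esub> (T3 \<otimes>\<^bsub>G\<^esub> T3)"
            using T3c xc by (simp add: y'_def O.m_assoc)
          then have xe: "x = y' \<otimes>\<^bsub>G\<^esub> T3" using T3sq xc by simp
          have "y' \<otimes>\<^bsub>G\<^esub> y0 \<in> D" using y'D y0(1) subgroup.m_closed[OF DS] by blast
          moreover have "mv n g p = mv n (embedW n (y' \<otimes>\<^bsub>G\<^esub> y0)) p" if "p \<in> P" for p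
          proof -
            have "mv n g p = mv n (embedW n y') (mv n (embedW n T3) p)"
              using x(2) xe by (simp add: G_def OW_mult flip: embed_mmul[OF n3] mv_mmul)
            also have "\<dots> = mv n (embedW n y') (mv n (embedW n y0) p)" using ev[OF that] by simp
            also have "\<dots> = mv n (embedW n (y' \<otimes>\<^bsub>G\<^esub> y0)) p"
              by (simp add: G_def OW_mult flip: embed_mmul[OF n3] mv_mmul)
            finally show ?thesis .
          qed
          then have "X = mv n (embedW n (y' \<otimes>\<^bsub>G\<^esub> y0)) ` P" using g(2) by (auto intro: image_cong)
          ultimately show ?thesis by (auto simp: orbit_on_def B_def)
        qed
      qed
    next
      show "orbit_on n B P \<subseteq> orbit_on n A P"
        unfolding orbit_on_def A_def using generate.incl[of _ "insert (tau n) B" "GLn n"] by blast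
    qed
  qed
  show ?thesis
    unfolding Let_def n_def[symmetric] G_def[symmetric] D_def[symmetric] B_def[symmetric]
      A_def[symmetric]
    using main by blast
qed


end
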